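(* Define $F(n)$ and $G(n)$ by $F(0)=F(1)=G(0)=G(1)=1$ and, for $n\ge 2$, \[ F(n)=G(n)+\sum_{\ell,m\ge 1,\ \ell+m=n} G(\ell)G(m),\qquad G(n)=F(n-1)+G(n-1)+\sum_{\ell,m\ge 1,\ \ell+m=n-1} G(\ell)G(m). \] Then for all $n\ge 2$, \[ G(n)=2\sum_{m=1}^{n-1} G(m)\,G(n-1-m). \] *)

theory Defs
  imports Main
begin

function F :: "nat \<Rightarrow> nat" and G :: "nat \<Rightarrow> nat" where
  "F n = (if n \<le> 1 then 1 else G n + (\<Sum>l = 1..n-1. G l * G (n - l)))"
| "G n = (if n \<le> 1 then 1 else
           F (n-1) + G (n-1) + (\<Sum>l = 1..n-2. G l * G (n - 1 - l)))"
  by pat_completeness auto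
termination
  by (relation "measure (\<lambda>x. case x of Inl n \<Rightarrow> 2 * n + 1 | Inr n \<Rightarrow> 2 * n)") auto

end

theory Submission
  imports Defs
begin

theorem mainTheorem3:
  fixes n :: nat
  assumes "n \<ge> 2"
  shows "G n = 2 * (\<Sum>m = 1..n-1. G m * G (n - 1 - m))"
proof -
  define S where "S = (\<Sum>l = 1..n-2. G l * G (n - 1 - l))"
  have G0: "G 0 = 1" by (subst G.simps) simp
  have G1: "G 1 = 1" by (subst G.simps) simp
  have F1: "F 1 = 1" by (subst F.simps) simp
  have Gn: "G n = F (n-1) + G (n-1) + S"
    using assms unfolding S_def by (subst G.simps) simp
  have split: "(\<Sum>m = 1..n-1. G m * G (n - 1 - m)) = S + G (n-1)"
  proof -
    have "{1..n-1} = insert (n-1) {1..n-2}" using assms by auto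
    then show ?thesis unfolding S_def using assms G0 by (simp add: add.commute)
  qed
  show ?thesis
  proof (cases "n = 2")
    case True
    then show ?thesis using G0 G1 F1 Gn split unfolding S_def by simp
  next
    case False
    then have "n - 1 \<ge> 2" using assms by simp
    then have "F (n-1) = G (n-1) + S" unfolding S_def
      by (subst F.simps) (simp add: numeral_eq_Suc)
    then show ?thesis using Gn split by simp
  qed
qed

end
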